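(* Let $\check\lambda\in Y$ and let $a$ be a simple root with simple coroot $\check a$, and write $m=n(\check a)$. Then, for the operator $\widetilde{\mathbf{T}}_a$ on $\mathbb{Z}_{\tau,\mathbb{g}}[Y]$ defined below: (1) If $\langle\check\lambda+\check\rho,a\rangle\ge0$ and $\langle\check\lambda+\check\rho,a\rangle\equiv0\bmod m$, then $(Y_{\check\lambda}+Y_{\check\lambda\bullet s_a})\widetilde{\mathbf{T}}_a=-(Y_{\check\lambda}+Y_{\check\lambda\bullet s_a})$. (2) If $0<\langle\check\lambda+\check\rho,a\rangle<m$, then, with $g=\mathbb{g}_{\langle\check\lambda+\check\rho,a\rangle\mathsf{Q}(\check a)}$, $(Y_{\check\lambda}-g\,Y_{\check\lambda\bullet s_a})\widetilde{\mathbf{T}}_a=-(Y_{\check\lambda}-g\,Y_{\check\lambda\bullet s_a})$. (3) If $j:=\langle\check\lambda+\check\rho,a\rangle>m$ and $j\not\equiv0\bmod m$, then setting $\check\lambda^{(1)}=\check\lambda-\mathrm{res}_m(j)\,\check a$ and $g=\mathbb{g}_{j\mathsf{Q}(\check a)}$, the element $u=Y_{\check\lambda}-g\,Y_{\check\lambda\bullet s_a}-g\,Y_{\check\lambda^{(1)}}+Y_{\check\lambda^{(1)}\bullet s_a}$ satisfies $u\,\widetilde{\mathbf{T}}_a=-u$.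
   Context: Let $(Y,\{\check a_i\}_{i\in I},X,\{a_i\}_{i\in I})$ be a root datum with finite-type Cartan matrix $(a_{ij})$, i.e. $Y,X$ are dual lattices with $\langle\check a_i,a_j\rangle=a_{ij}$. The Weyl group $W$ acts on $Y$ (written on the right) by $\check\lambda\cdot s_i=\check\lambda-\langle\check\lambda,a_i\rangle\check a_i$. Let $\check\rho\in Y\otimes\mathbb{Q}$ be half the sum of the positive coroots, so $\langle\check\rho,a_i\rangle=1$; for a simple root $a$ set $\check\lambda\bullet s_a=\check\lambda-\langle\check\lambda+\check\rho,a\rangle\check a\in Y$. Fix an integer $n\ge1$ and a $W$-invariant $\mathbb{Z}$-valued quadratic form $\mathsf{Q}$ on $Y$; for a simple coroot $\check a$, $n(\check a)$ is the smallest positive integer with $n(\check a)\mathsf{Q}(\check a)\equiv0\bmod n$. (Standing assumption: the associated twisted root datum is simply connected.) For a positive integer $m$, $\mathrm{res}_m:\mathbb{Z}\to\{0,\dots,m-1\}$ is the residue map. Let $\mathbb{Z}_{\tau,\mathbb{g}}=\mathbb{Z}[\tau^{\pm1},\{\mathbb{g}_k\}_{k\in\mathbb{Z}}]$ modulo the relations $\mathbb{g}_k=\mathbb{g}_l$ if $k\equiv l\bmod n$, $\mathbb{g}_k\mathbb{g}_{-k}=\tau^2$ if $k\not\equiv0\bmod n$, and $\mathbb{g}_0=-1$. In the group algebra $\mathbb{Z}_{\tau,\mathbb{g}}[Y]$ (basis $Y_{\check\mu}$, $\check\mu\in Y$), define the $\mathbb{Z}_{\tau,\mathbb{g}}$-linear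 operator $\widetilde{\mathbf{T}}_a$ (written on the right), for $m=n(\check a)$, by $Y_{\check\lambda}\widetilde{\mathbf{T}}_a=\mathbb{g}_{\langle\check\lambda+\check\rho,a\rangle\mathsf{Q}(\check a)}Y_{\check\lambda\bullet s_a}+(\tau^2-1)\sum_{k\ge0,\ km\le\langle\check\lambda,a\rangle}Y_{\check\lambda-km\check a}$ if $\langle\check\lambda,a\rangle\ge0$, and $Y_{\check\lambda}\widetilde{\mathbf{T}}_a=\mathbb{g}_{\langle\check\lambda+\check\rho,a\rangle\mathsf{Q}(\check a)}Y_{\check\lambda\bullet s_a}+(1-\tau^2)\sum_{k>0,\ km<-\langle\check\lambda,a\rangle}Y_{\check\lambda+km\check a}$ if $\langle\check\lambda,a\rangle<0$ (the metaplectic Demazure–Lusztig operator). *)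

theory Defs
  imports Complex_Main
begin

text \<open>The lattices Y and X are modelled as Z^r (functions 'r \<Rightarrow> int, 'r finite)
  with the standard perfect pairing; the index set I of simple roots is a finite type 'i.\<close>

type_synonym 'r lat = "'r \<Rightarrow> int"

definition pair :: "'r::finite lat \<Rightarrow> 'r lat \<Rightarrow> int" where
  "pair y x = (\<Sum>r\<in>UNIV. y r * x r)"

definition vadd :: "'r lat \<Rightarrow> 'r lat \<Rightarrow> 'r lat" where
  "vadd x y = (\<lambda>r. x r + y r)"

definition vsub :: "'r lat \<Rightarrow> 'r lat \<Rightarrow> 'r lat" where
  "vsub x y = (\<lambda>r. x r - y r)"

definition smul :: "int \<Rightarrow> 'r lat \<Rightarrow> 'r lat" where
  "smul k x = (\<lambda>r. k * x r)"

text \<open>Root datum (Y, coroots ac, X, roots ar) whose Cartan matrix a_ij = <ac i, ar j> is a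
  generalized Cartan matrix of finite type (symmetrizable with positive definite D A).\<close>
definition finite_type_root_datum :: "('i::finite \<Rightarrow> 'r::finite lat) \<Rightarrow> ('i \<Rightarrow> 'r lat) \<Rightarrow> bool" where
  "finite_type_root_datum ac ar \<longleftrightarrow>
     (\<forall>i. pair (ac i) (ar i) = 2) \<and>
     (\<forall>i j. i \<noteq> j \<longrightarrow> pair (ac i) (ar j) \<le> 0) \<and>
     (\<forall>i j. pair (ac i) (ar j) = 0 \<longleftrightarrow> pair (ac j) (ar i) = 0) \<and>
     (\<exists>d::'i \<Rightarrow> real. (\<forall>i. d i > 0) \<and>
        (\<forall>i j. d i * of_int (pair (ac i) (ar j)) = d j * of_int (pair (ac j) (ar i))) \<and>
        (\<forall>v::'i \<Rightarrow> real. v \<noteq> (\<lambda>_. 0) \<longrightarrow>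
           (\<Sum>i\<in>UNIV. \<Sum>j\<in>UNIV. v i * d i * of_int (pair (ac i) (ar j)) * v j) > 0))"

definition bilin_of :: "('r lat \<Rightarrow> int) \<Rightarrow> 'r lat \<Rightarrow> 'r lat \<Rightarrow> int" where
  "bilin_of Q x y = Q (vadd x y) - Q x - Q y"

definition quadratic_form :: "('r lat \<Rightarrow> int) \<Rightarrow> bool" where
  "quadratic_form Q \<longleftrightarrow> (\<forall>k x. Q (smul k x) = k^2 * Q x) \<and>
     (\<forall>x y z. bilin_of Q (vadd x y) z = bilin_of Q x z + bilin_of Q y z)"

definition sref :: "('i \<Rightarrow> 'r::finite lat) \<Rightarrow> ('i \<Rightarrow> 'r lat) \<Rightarrow> 'i \<Rightarrow> 'r lat \<Rightarrow> 'r lat" where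
  "sref ac ar i y = vsub y (smul (pair y (ar i)) (ac i))"

text \<open>W-invariance (W is generated by the simple reflections).\<close>
definition W_invariant :: "('i \<Rightarrow> 'r::finite lat) \<Rightarrow> ('i \<Rightarrow> 'r lat) \<Rightarrow> ('r lat \<Rightarrow> int) \<Rightarrow> bool" where
  "W_invariant ac ar Q \<longleftrightarrow> (\<forall>i y. Q (sref ac ar i y) = Q y)"

definition ncheck :: "nat \<Rightarrow> ('r lat \<Rightarrow> int) \<Rightarrow> 'r lat \<Rightarrow> nat" where
  "ncheck n Q c = (LEAST m::nat. 0 < m \<and> int n dvd int m * Q c)"

text \<open>Simply connected twisted root datum: Y_{Q,n} = {y. B_Q(y,y') in nZ for all y'}
  is spanned by the modified coroots n(ac_i) ac_i.\<close>
definition twisted_simply_connected ::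
    "nat \<Rightarrow> ('r::finite lat \<Rightarrow> int) \<Rightarrow> ('i::finite \<Rightarrow> 'r lat) \<Rightarrow> bool" where
  "twisted_simply_connected n Q ac \<longleftrightarrow>
     {y. \<forall>y'. int n dvd bilin_of Q y y'} =
     {(\<lambda>r. \<Sum>i\<in>UNIV. k i * int (ncheck n Q (ac i)) * ac i r) | k. True}"

text \<open>Relations of Z_{tau,g}, for an arbitrary commutative ring receiving tau, g_k.
  Z_{tau,g} is the universal such ring.\<close>
definition gauss_rel :: "nat \<Rightarrow> 'k::comm_ring_1 \<Rightarrow> (int \<Rightarrow> 'k) \<Rightarrow> bool" where
  "gauss_rel n \<tau> g \<longleftrightarrow> (\<exists>t. \<tau> * t = 1) \<and>
     (\<forall>k l. k mod int n = l mod int n \<longrightarrow> g k = g l) \<and>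
     (\<forall>k. \<not> int n dvd k \<longrightarrow> g k * g (- k) = \<tau>^2) \<and>
     g 0 = -1"

text \<open>Elements of the group algebra k[Y] are finitely supported functions Y \<Rightarrow> k;
  Ymon v is the basis element Y_v.\<close>
definition Ymon :: "'r lat \<Rightarrow> 'r lat \<Rightarrow> 'k::comm_ring_1" where
  "Ymon v = (\<lambda>\<mu>. if \<mu> = v then 1 else 0)"

text \<open>Dot action: y \<bullet> s_a = y - <y + rho, a> ac = y - (<y,a> + 1) ac.\<close>
definition dot_s :: "('i \<Rightarrow> 'r::finite lat) \<Rightarrow> ('i \<Rightarrow> 'r lat) \<Rightarrow> 'i \<Rightarrow> 'r lat \<Rightarrow> 'r lat" where
  "dot_s ac ar i y = vsub y (smul (pair y (ar i) + 1) (ac i))"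

definition T_basis :: "nat \<Rightarrow> ('r::finite lat \<Rightarrow> int) \<Rightarrow> ('i \<Rightarrow> 'r lat) \<Rightarrow> ('i \<Rightarrow> 'r lat) \<Rightarrow> 'i
    \<Rightarrow> 'k::comm_ring_1 \<Rightarrow> (int \<Rightarrow> 'k) \<Rightarrow> 'r lat \<Rightarrow> ('r lat \<Rightarrow> 'k)" where
  "T_basis n Q ac ar i \<tau> g lam = (\<lambda>\<mu>.
     (let c = pair lam (ar i); m = int (ncheck n Q (ac i)); q = Q (ac i) in
      g ((c + 1) * q) * Ymon (dot_s ac ar i lam) \<mu> +
      (if c \<ge> 0
       then (\<tau>^2 - 1) * (\<Sum>k\<in>{k. 0 \<le> k \<and> k * m \<le> c}. Ymon (vsub lam (smul (k * m) (ac i))) \<mu>)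
       else (1 - \<tau>^2) * (\<Sum>k\<in>{k. 0 < k \<and> k * m < - c}. Ymon (vadd lam (smul (k * m) (ac i))) \<mu>))))"

definition T_op :: "nat \<Rightarrow> ('r::finite lat \<Rightarrow> int) \<Rightarrow> ('i \<Rightarrow> 'r lat) \<Rightarrow> ('i \<Rightarrow> 'r lat) \<Rightarrow> 'i
    \<Rightarrow> 'k::comm_ring_1 \<Rightarrow> (int \<Rightarrow> 'k) \<Rightarrow> ('r lat \<Rightarrow> 'k) \<Rightarrow> ('r lat \<Rightarrow> 'k)" where
  "T_op n Q ac ar i \<tau> g f = (\<lambda>\<mu>. \<Sum>lam\<in>{lam. f lam \<noteq> 0}. f lam * T_basis n Q ac ar i \<tau> g lam \<mu>)"

end

theory Submission
  imports Defs
begin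


lemma pair_Z: "pair (vsub x (smul t y)) z = pair x z - t * pair y z"
  by (simp add: pair_def vsub_def smul_def algebra_simps sum_subtractf sum_distrib_left)

lemma vsub_Z: "vsub (vsub x (smul s y)) (smul t y) = vsub x (smul (s+t) y)"
  by (auto simp: vsub_def smul_def algebra_simps)

lemma vadd_Z: "vadd (vsub x (smul s y)) (smul t y) = vsub x (smul (s-t) y)"
  by (auto simp: vadd_def vsub_def smul_def algebra_simps)

lemma Z0: "vsub x (smul 0 y) = x"
  by (auto simp: vsub_def smul_def)

lemma dot_Z: assumes "pair (ac i) (ar i) = 2"
  shows "dot_s ac ar i (vsub lam (smul t (ac i))) = vsub lam (smul (pair lam (ar i) + 1 - t) (ac i))"
  unfolding dot_s_def using assms by (simp add: pair_Z vsub_Z algebra_simps)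

lemma Ymon_Z: assumes "pair (ac i) (ar i) = 2"
  shows "Ymon (vsub lam (smul s (ac i))) (vsub lam (smul t (ac i))) = (if s = t then 1 else 0)"
proof (cases "s = t")
  case False
  have "vsub lam (smul s (ac i)) \<noteq> vsub lam (smul t (ac i))"
  proof
    assume "vsub lam (smul s (ac i)) = vsub lam (smul t (ac i))"
    hence "pair (vsub lam (smul s (ac i))) (ar i) = pair (vsub lam (smul t (ac i))) (ar i)" by simp
    with assms False show False by (simp add: pair_Z)
  qed
  thus ?thesis using False by (simp add: Ymon_def)
qed (simp add: Ymon_def)

lemma le_div_iff_int: "(0::int) < m \<Longrightarrow> (k \<le> c div m) = (k * m \<le> c)"
  by (smt (verit, del_insts) minus_div_mult_eq_mod
    nonzero_mult_div_cancel_right pos_mod_sign zdiv_mono1)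
lemma set1: "(0::int) < m \<Longrightarrow> {k. 0 \<le> k \<and> k * m \<le> c} = {0..c div m}"
  by (auto simp: le_div_iff_int)
lemma set2: "(0::int) < m \<Longrightarrow> {k. 0 < k \<and> k * m < - c} = {1..(- c - 1) div m}"
  by (auto simp: le_div_iff_int)


lemma TB_Z:
  assumes a2: "pair (ac i) (ar i) = 2" and mdef: "m = int (ncheck n Q (ac i))" and mpos: "0 < m"
  shows "T_basis n Q ac ar i \<tau> g (vsub lam (smul t (ac i))) \<mu> =
    g ((pair lam (ar i) - 2*t + 1) * Q (ac i)) * Ymon (vsub lam (smul (pair lam (ar i) + 1 - t) (ac i))) \<mu> +
    (if pair lam (ar i) - 2*t \<ge> 0
     then (\<tau>^2-1) * (\<Sum>k\<in>{0..(pair lam (ar i) - 2*t) div m}. Ymon (vsub lam (smul (t + k * m) (ac i))) \<mu>)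
     else (1-\<tau>^2) * (\<Sum>k\<in>{1..(2*t - pair lam (ar i) - 1) div m}. Ymon (vsub lam (smul (t - k * m) (ac i))) \<mu>))"
proof -
  have p: "pair (vsub lam (smul t (ac i))) (ar i) = pair lam (ar i) - 2*t" using a2 by (simp add: pair_Z)
  have e: "- (pair lam (ar i) - 2 * t) - 1 = 2*t - pair lam (ar i) - 1" by simp
  show ?thesis
    unfolding T_basis_def Let_def p dot_Z[where ac=ac and ar=ar and i=i, OF a2] mdef[symmetric] set1[OF mpos] set2[OF mpos] e
    by (simp add: vsub_Z vadd_Z)
qed

lemma T_op_fin:
  assumes "finite S" "{x. f x \<noteq> 0} \<subseteq> S"
  shows "T_op n Q ac ar i \<tau> g f \<mu> = (\<Sum>x\<in>S. f x * T_basis n Q ac ar i \<tau> g x \<mu>)"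
  unfolding T_op_def
  by (rule sum.mono_neutral_left) (use assms in auto)

lemma ncheck_props:
  assumes "n \<ge> 1"
  shows "0 < ncheck n Q c" "int n dvd int (ncheck n Q c) * Q c"
    "int n dvd x * Q c \<Longrightarrow> int (ncheck n Q c) dvd x"
proof -
  let ?P = "\<lambda>m::nat. 0 < m \<and> int n dvd int m * Q c"
  have P: "?P (ncheck n Q c)" unfolding ncheck_def
    by (rule LeastI[of _ n]) (use assms in auto)
  thus "0 < ncheck n Q c" "int n dvd int (ncheck n Q c) * Q c" by auto
  assume x: "int n dvd x * Q c"
  define m where "m = int (ncheck n Q c)"
  have mpos: "m > 0" using P m_def by simp
  have "x mod m * Q c = x * Q c - (x div m) * (m * Q c)"
    by (simp add: algebra_simps minus_div_mult_eq_mod[symmetric])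
  hence d: "int n dvd (x mod m) * Q c" using x P m_def by simp
  show "int (ncheck n Q c) dvd x"
  proof (rule ccontr)
    assume "\<not> int (ncheck n Q c) dvd x"
    hence "x mod m \<noteq> 0" using m_def by (simp add: dvd_eq_mod_eq_0)
    hence pos: "0 < x mod m" using mpos by (smt (verit) pos_mod_sign)
    have "?P (nat (x mod m))" using pos d by simp
    hence "ncheck n Q c \<le> nat (x mod m)" unfolding ncheck_def by (rule Least_le)
    moreover have "x mod m < m" using mpos by simp
    ultimately show False using m_def pos by (simp add: nat_le_iff)
  qed
qed


lemma div_eqI_int: assumes "(0::int) < m" "N*m \<le> x" "x < N*m + m" shows "x div m = N"
proof -
  have "N \<le> x div m" using assms by (simp add: le_div_iff_int)
  moreover have "\<not> N + 1 \<le> x div m" using assms by (simp add: le_div_iff_int algebra_simps)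
  ultimately show ?thesis by simp
qed

lemma rev_sum:
  fixes h :: "int \<Rightarrow> 'k::comm_monoid_add"
  shows "(\<Sum>k\<in>{a..b}. h (N - k)) = (\<Sum>k\<in>{N-b..N-a}. h k)"
  by (rule sum.reindex_bij_witness[where i="\<lambda>k. N - k" and j="\<lambda>k. N - k"]) auto



lemma case3:
  fixes ac ar :: "'i::finite \<Rightarrow> ('r::finite \<Rightarrow> int)"
    and \<tau> :: "'k::comm_ring_1" and g :: "int \<Rightarrow> 'k"
  assumes a2: "pair (ac i) (ar i) = 2" and mdef: "m = int (ncheck n Q (ac i))" and mpos: "0 < m"
   and hq: "int n dvd m * Q (ac i)" and hx: "\<And>x. int n dvd x * Q (ac i) \<Longrightarrow> m dvd x"
   and gp: "\<And>k l. k mod int n = l mod int n \<Longrightarrow> g k = g l"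
   and gi: "\<And>k. \<not> int n dvd k \<Longrightarrow> g k * g (-k) = \<tau>^2"
   and jdef: "j = pair lam (ar i) + 1" and jm: "j > m" and nd: "\<not> m dvd j"
   and udef: "u = (\<lambda>\<mu>. Ymon lam \<mu> - g (j * Q (ac i)) * Ymon (dot_s ac ar i lam) \<mu>
        - g (j * Q (ac i)) * Ymon (vsub lam (smul (j mod m) (ac i))) \<mu>
        + Ymon (dot_s ac ar i (vsub lam (smul (j mod m) (ac i)))) \<mu>)"
  shows "T_op n Q ac ar i \<tau> g u = (\<lambda>\<mu>. - u \<mu>)"
proof
  fix \<mu>
  define q where "q = Q (ac i)"
  define c where "c = pair lam (ar i)"
  define Z where "Z t = vsub lam (smul t (ac i))" for t
  define e where "e t = (Ymon (Z t) \<mu> :: 'k)" for t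
  define r where "r = j mod m"
  define N where "N = j div m"
  define G where "G = g (j * q)"
  define G' where "G' = g (- j * q)"
  have jNr: "j = N * m + r" unfolding N_def r_def by simp
  have r0: "0 < r" using nd mpos unfolding r_def
    by (smt (verit) dvd_eq_mod_eq_0 pos_mod_sign)
  have rm: "r < m" using mpos unfolding r_def by simp
  have N1: "N \<ge> 1" using jm mpos unfolding N_def by (simp add: le_div_iff_int)
  have Nm: "N * m \<ge> m" using N1 mpos by simp
  have YZ: "Ymon (Z s) (Z t) = (if s = t then 1 else 0)" for s t
    unfolding Z_def using Ymon_Z[where ac=ac and ar=ar and i=i, OF a2] .
  have GG: "G * G' = \<tau>^2"
  proof -
    have "\<not> int n dvd j * q" using hx nd q_def by blast
    from gi[OF this] show ?thesis unfolding G_def G'_def by simp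
  qed
  have gmod: "g (x * q) = g (y * q)" if xy: "m dvd x - y" for x y
  proof -
    obtain k where "x - y = m * k" using xy by blast
    hence "x * q - y * q = k * (m * q)" by (simp add: algebra_simps)
    hence "int n dvd x * q - y * q" using hq q_def by simp
    thus ?thesis by (intro gp) (simp add: mod_eq_dvd_iff)
  qed
  have u_eq: "u = (\<lambda>\<mu>. Ymon (Z 0) \<mu> - G * Ymon (Z j) \<mu> - G * Ymon (Z r) \<mu> + Ymon (Z (j - r)) \<mu>)"
    unfolding udef Z_def r_def G_def q_def
    using dot_Z[where ac=ac and ar=ar and i=i, OF a2, of lam 0] dot_Z[where ac=ac and ar=ar and i=i, OF a2, of lam "j mod m"]
    by (simp add: Z0 jdef)
  have dist: "0 \<noteq> j" "0 \<noteq> r" "0 \<noteq> j - r" "j \<noteq> r" "j \<noteq> j - r" "r \<noteq> j - r"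
    using jNr r0 rm Nm by linarith+
  have TO: "T_op n Q ac ar i \<tau> g u \<mu> = (\<Sum>x\<in>{Z 0, Z j, Z r, Z (j - r)}. u x * T_basis n Q ac ar i \<tau> g x \<mu>)"
    by (rule T_op_fin) (auto simp: u_eq Ymon_def)
  have Zinj: "Z s \<noteq> Z t" if "s \<noteq> t" for s t
  proof
    assume "Z s = Z t"
    hence "pair (Z s) (ar i) = pair (Z t) (ar i)" by simp
    thus False using a2 that unfolding Z_def by (simp add: pair_Z)
  qed
  have TO2: "T_op n Q ac ar i \<tau> g u \<mu> = T_basis n Q ac ar i \<tau> g (Z 0) \<mu> - G * T_basis n Q ac ar i \<tau> g (Z j) \<mu>
     - G * T_basis n Q ac ar i \<tau> g (Z r) \<mu> + T_basis n Q ac ar i \<tau> g (Z (j - r)) \<mu>"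
    unfolding TO using dist Zinj by (simp add: u_eq YZ algebra_simps)
  have TB: "T_basis n Q ac ar i \<tau> g (Z t) \<mu> =
    g ((c - 2*t + 1) * q) * e (c + 1 - t) +
    (if c - 2*t \<ge> 0
     then (\<tau>^2-1) * (\<Sum>k\<in>{0..(c - 2*t) div m}. e (t + k * m))
     else (1-\<tau>^2) * (\<Sum>k\<in>{1..(2*t - c - 1) div m}. e (t - k * m)))" for t
    unfolding Z_def e_def c_def q_def by (rule TB_Z[where ac=ac and ar=ar and i=i, OF a2 mdef mpos])
  have cj: "c = j - 1" using jdef c_def by simp
  have d1: "(j - 1) div m = N" by (rule div_eqI_int) (use mpos jNr r0 rm in auto)
  have d2: "j div m = N" by (simp add: N_def)
  have d3: "(j - 1 - 2 * r) div m = N - 1" by (rule div_eqI_int) (use mpos jNr r0 rm in \<open>auto simp: algebra_simps\<close>)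
  have d4: "(j - 2 * r) div m = N - 1" by (rule div_eqI_int) (use mpos jNr r0 rm in \<open>auto simp: algebra_simps\<close>)
  have gr: "g ((j - 2 * r) * q) = G'" unfolding G'_def by (rule gmod) (simp add: jNr)
  have gjr: "g ((2 * r - j) * q) = G" unfolding G_def by (rule gmod) (simp add: jNr)
  define A where "A = \<tau>^2 - (1::'k)"
  define S1 where "S1 = (\<Sum>k\<in>{0..N}. e (k * m))"
  define S2 where "S2 = (\<Sum>k\<in>{1..N}. e (j - k * m))"
  define S3 where "S3 = (\<Sum>k\<in>{0..N-1}. e (r + k * m))"
  define S4 where "S4 = (\<Sum>k\<in>{1..N-1}. e (j - r - k * m))"
  have T0: "T_basis n Q ac ar i \<tau> g (Z 0) \<mu> = G * e j + A * S1"
    using TB[of 0] mpos jm unfolding cj G_def A_def S1_def by (simp add: d1)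
  have T1: "T_basis n Q ac ar i \<tau> g (Z j) \<mu> = G' * e 0 - A * S2"
  proof -
    have "(2 * j - (j - 1) - 1) = j" by simp
    thus ?thesis using TB[of j] mpos jm unfolding cj G'_def A_def S2_def by (simp add: algebra_simps d2)
  qed
  have T2: "T_basis n Q ac ar i \<tau> g (Z r) \<mu> = G' * e (j - r) + A * S3"
  proof -
    have h: "c - 2*r \<ge> 0" using jNr Nm rm cj by linarith
    have e1: "c - 2*r + 1 = j - 2*r" "c + 1 - r = j - r" "(c - 2*r) div m = N - 1" using cj d3 by simp_all
    show ?thesis using TB[of r] h unfolding e1 gr A_def S3_def by simp
  qed
  have T3: "T_basis n Q ac ar i \<tau> g (Z (j - r)) \<mu> = G * e r - A * S4"
  proof -
    have "c - 2 * (j - r) = r - N * m - 1" using cj jNr by simp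
    hence h: "\<not> c - 2 * (j - r) \<ge> 0" using Nm rm by linarith
    have e1: "c - 2*(j-r) + 1 = 2*r - j" "c + 1 - (j - r) = r" "(2 * (j - r) - c - 1) div m = N - 1"
      using cj d4 by simp_all
    have "T_basis n Q ac ar i \<tau> g (Z (j - r)) \<mu> = G * e r + (1 - \<tau>^2) * S4"
      using TB[of "j - r"] h unfolding e1 gjr S4_def by simp
    thus ?thesis unfolding A_def by (simp add: algebra_simps)
  qed
  have S23: "S2 = S3"
  proof -
    have "S2 = (\<Sum>k\<in>{1..N}. (\<lambda>k. e (r + k * m)) (N - k))"
      unfolding S2_def by (rule sum.cong) (auto simp: jNr algebra_simps)
    also have "\<dots> = S3" unfolding S3_def using rev_sum[where h="\<lambda>k. e (r + k * m)" and a=1 and b=N and N=N] by (simp only: diff_self)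
    finally show ?thesis .
  qed
  have S14: "S1 = e 0 + e (j - r) + S4"
  proof -
    have "S4 = (\<Sum>k\<in>{1..N-1}. (\<lambda>k. e (k * m)) (N - k))"
      unfolding S4_def by (rule sum.cong) (auto simp: jNr algebra_simps)
    also have "\<dots> = (\<Sum>k\<in>{1..N-1}. e (k * m))" using rev_sum[where h="\<lambda>k. e (k * m)" and a=1 and b="N - 1" and N=N] by (simp only: diff_diff_eq2 diff_self) simp
    finally have s4: "S4 = (\<Sum>k\<in>{1..N-1}. e (k * m))" .
    have "{0..N} = insert 0 (insert N {1..N-1})" using N1 by auto
    hence "S1 = e 0 + (e (N * m) + (\<Sum>k\<in>{1..N-1}. e (k * m)))"
      unfolding S1_def using N1 by simp
    thus ?thesis using s4 jNr by (simp add: algebra_simps)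
  qed
  have "T_op n Q ac ar i \<tau> g u \<mu> = G * e j + G * e r - e 0 - e (j - r)"
  proof -
    have "T_op n Q ac ar i \<tau> g u \<mu> = G * e j + G * e r + A * e 0 + A * e (j - r) - (G * G') * e 0 - (G * G') * e (j - r)"
      unfolding TO2 T0 T1 T2 T3 S14 S23 by (simp add: algebra_simps)
    thus ?thesis unfolding GG A_def by (simp add: algebra_simps)
  qed
  thus "T_op n Q ac ar i \<tau> g u \<mu> = - u \<mu>" by (simp add: u_eq e_def)
qed

lemma case12_common:
  assumes a2: "pair (ac i) (ar i) = 2"
  shows "Z = (\<lambda>t. vsub lam (smul t (ac i))) \<Longrightarrow> Z s \<noteq> Z t \<longleftrightarrow> s \<noteq> t"
proof -
  assume Zd: "Z = (\<lambda>t. vsub lam (smul t (ac i)))"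
  have "Z s = Z t \<Longrightarrow> s = t"
  proof -
    assume "Z s = Z t"
    hence "pair (Z s) (ar i) = pair (Z t) (ar i)" by simp
    thus "s = t" using a2 unfolding Zd by (simp add: pair_Z)
  qed
  thus ?thesis by auto
qed

lemma case1:
  fixes ac ar :: "'i::finite \<Rightarrow> ('r::finite \<Rightarrow> int)"
    and \<tau> :: "'k::comm_ring_1" and g :: "int \<Rightarrow> 'k"
  assumes a2: "pair (ac i) (ar i) = 2" and mdef: "m = int (ncheck n Q (ac i))" and mpos: "0 < m"
   and hq: "int n dvd m * Q (ac i)"
   and gp: "\<And>k l. k mod int n = l mod int n \<Longrightarrow> g k = g l"
   and g0: "g 0 = -1"
   and jdef: "j = pair lam (ar i) + 1" and j0: "j \<ge> 0" and md: "m dvd j"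
   and udef: "u = (\<lambda>\<mu>. Ymon lam \<mu> + Ymon (dot_s ac ar i lam) \<mu>)"
  shows "T_op n Q ac ar i \<tau> g u = (\<lambda>\<mu>. - u \<mu>)"
proof
  fix \<mu>
  define q where "q = Q (ac i)"
  define c where "c = pair lam (ar i)"
  define Z where "Z t = vsub lam (smul t (ac i))" for t
  define e where "e t = (Ymon (Z t) \<mu> :: 'k)" for t
  define N where "N = j div m"
  have jN: "j = N * m" unfolding N_def using md by simp
  have N0: "N \<ge> 0" using j0 mpos jN by (simp add: zero_le_mult_iff)
  have YZ: "Ymon (Z s) (Z t) = (if s = t then 1 else 0)" for s t
    unfolding Z_def using Ymon_Z[where ac=ac and ar=ar and i=i, OF a2] .
  have Zinj: "Z s \<noteq> Z t \<longleftrightarrow> s \<noteq> t" for s t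
    by (rule case12_common[where ac=ac and ar=ar and i=i and lam=lam, OF a2]) (simp add: Z_def fun_eq_iff)
  have gm: "g (x * q) = -1" if xy: "m dvd x" for x
  proof -
    obtain k where "x = m * k" using xy by blast
    hence xq: "x * q = k * (m * q)" by (simp add: algebra_simps)
    have "int n dvd k * (m * q)" using hq q_def by (simp add: dvd_mult)
    hence "int n dvd x * q" unfolding xq .
    hence "g (x * q) = g 0" by (intro gp) (simp add: mod_eq_dvd_iff)
    thus ?thesis using g0 by simp
  qed
  have u_eq: "u = (\<lambda>\<mu>. Ymon (Z 0) \<mu> + Ymon (Z j) \<mu>)"
    unfolding udef Z_def
    using dot_Z[where ac=ac and ar=ar and i=i, OF a2, of lam 0]
    by (simp add: Z0 jdef)
  have TB: "T_basis n Q ac ar i \<tau> g (Z t) \<mu> =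
    g ((c - 2*t + 1) * q) * e (c + 1 - t) +
    (if c - 2*t \<ge> 0
     then (\<tau>^2-1) * (\<Sum>k\<in>{0..(c - 2*t) div m}. e (t + k * m))
     else (1-\<tau>^2) * (\<Sum>k\<in>{1..(2*t - c - 1) div m}. e (t - k * m)))" for t
    unfolding Z_def e_def c_def q_def by (rule TB_Z[where ac=ac and ar=ar and i=i, OF a2 mdef mpos])
  have cj: "c = j - 1" using jdef c_def by simp
  show "T_op n Q ac ar i \<tau> g u \<mu> = - u \<mu>"
  proof (cases "j = 0")
    case True
    have TO: "T_op n Q ac ar i \<tau> g u \<mu> = (\<Sum>x\<in>{Z 0}. u x * T_basis n Q ac ar i \<tau> g x \<mu>)"
      by (rule T_op_fin) (auto simp: u_eq Ymon_def True)
    have T0: "T_basis n Q ac ar i \<tau> g (Z 0) \<mu> = - e 0"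
      using TB[of 0] True cj mpos g0 by simp
    show ?thesis unfolding TO using T0 by (simp add: u_eq YZ True e_def)
  next
    case False
    have N1: "N \<ge> 1" using False N0 jN by (cases "N = 0") auto
    have TO: "T_op n Q ac ar i \<tau> g u \<mu> = (\<Sum>x\<in>{Z 0, Z j}. u x * T_basis n Q ac ar i \<tau> g x \<mu>)"
      by (rule T_op_fin) (auto simp: u_eq Ymon_def)
    have TO2: "T_op n Q ac ar i \<tau> g u \<mu> = T_basis n Q ac ar i \<tau> g (Z 0) \<mu> + T_basis n Q ac ar i \<tau> g (Z j) \<mu>"
      unfolding TO using False Zinj[of 0 j] by (simp add: u_eq YZ)
    define A where "A = \<tau>^2 - (1::'k)"
    define S1 where "S1 = (\<Sum>k\<in>{0..N-1}. e (k * m))"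
    define S2 where "S2 = (\<Sum>k\<in>{1..N}. e (j - k * m))"
    have d1: "(j - 1) div m = N - 1" by (rule div_eqI_int) (use mpos jN N1 in \<open>auto simp: algebra_simps\<close>)
    have T0: "T_basis n Q ac ar i \<tau> g (Z 0) \<mu> = - e j + A * S1"
    proof -
      have h: "c - 2*0 \<ge> 0" using cj jN N1 mpos False j0 by simp
      have e1: "c - 2*0 + 1 = j" "c + 1 - 0 = j" "(c - 2*0) div m = N - 1" using cj d1 by simp_all
      show ?thesis using TB[of 0] h gm[OF md] unfolding e1 A_def S1_def by simp
    qed
    have T1: "T_basis n Q ac ar i \<tau> g (Z j) \<mu> = - e 0 - A * S2"
    proof -
      have h: "\<not> c - 2*j \<ge> 0" using cj j0 by simp
      have e1: "c - 2*j + 1 = - j" "c + 1 - j = 0" "(2*j - c - 1) div m = N" using cj N_def by simp_all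
      have "m dvd - j" using md by simp
      have "T_basis n Q ac ar i \<tau> g (Z j) \<mu> = - e 0 + (1 - \<tau>^2) * S2"
        using TB[of j] h gm[OF \<open>m dvd - j\<close>] unfolding e1 S2_def by simp
      thus ?thesis unfolding A_def by (simp add: algebra_simps)
    qed
    have S12: "S2 = S1"
    proof -
      have "S2 = (\<Sum>k\<in>{1..N}. (\<lambda>k. e (k * m)) (N - k))"
        unfolding S2_def by (rule sum.cong) (auto simp: jN algebra_simps)
      also have "\<dots> = S1" unfolding S1_def
        using rev_sum[where h="\<lambda>k. e (k * m)" and a=1 and b=N and N=N] by (simp only: diff_self)
      finally show ?thesis .
    qed
    show ?thesis unfolding TO2 T0 T1 S12 by (simp add: u_eq e_def)
  qed
qed

lemma case2:
  fixes ac ar :: "'i::finite \<Rightarrow> ('r::finite \<Rightarrow> int)"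
    and \<tau> :: "'k::comm_ring_1" and g :: "int \<Rightarrow> 'k"
  assumes a2: "pair (ac i) (ar i) = 2" and mdef: "m = int (ncheck n Q (ac i))" and mpos: "0 < m"
   and hx: "\<And>x. int n dvd x * Q (ac i) \<Longrightarrow> m dvd x"
   and gi: "\<And>k. \<not> int n dvd k \<Longrightarrow> g k * g (-k) = \<tau>^2"
   and jdef: "j = pair lam (ar i) + 1" and j0: "0 < j" and jm: "j < m"
   and udef: "u = (\<lambda>\<mu>. Ymon lam \<mu> - g (j * Q (ac i)) * Ymon (dot_s ac ar i lam) \<mu>)"
  shows "T_op n Q ac ar i \<tau> g u = (\<lambda>\<mu>. - u \<mu>)"
proof
  fix \<mu>
  define q where "q = Q (ac i)"
  define c where "c = pair lam (ar i)"
  define Z where "Z t = vsub lam (smul t (ac i))" for t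
  define e where "e t = (Ymon (Z t) \<mu> :: 'k)" for t
  define G where "G = g (j * q)"
  define G' where "G' = g (- j * q)"
  have YZ: "Ymon (Z s) (Z t) = (if s = t then 1 else 0)" for s t
    unfolding Z_def using Ymon_Z[where ac=ac and ar=ar and i=i, OF a2] .
  have Zinj: "Z s \<noteq> Z t \<longleftrightarrow> s \<noteq> t" for s t
    by (rule case12_common[where ac=ac and ar=ar and i=i and lam=lam, OF a2]) (simp add: Z_def fun_eq_iff)
  have nd: "\<not> m dvd j" using j0 jm zdvd_imp_le by fastforce
  have GG: "G * G' = \<tau>^2"
  proof -
    have "\<not> int n dvd j * q" using hx nd q_def by blast
    from gi[OF this] show ?thesis unfolding G_def G'_def by simp
  qed
  have u_eq: "u = (\<lambda>\<mu>. Ymon (Z 0) \<mu> - G * Ymon (Z j) \<mu>)"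
    unfolding udef Z_def G_def q_def
    using dot_Z[where ac=ac and ar=ar and i=i, OF a2, of lam 0]
    by (simp add: Z0 jdef)
  have TB: "T_basis n Q ac ar i \<tau> g (Z t) \<mu> =
    g ((c - 2*t + 1) * q) * e (c + 1 - t) +
    (if c - 2*t \<ge> 0
     then (\<tau>^2-1) * (\<Sum>k\<in>{0..(c - 2*t) div m}. e (t + k * m))
     else (1-\<tau>^2) * (\<Sum>k\<in>{1..(2*t - c - 1) div m}. e (t - k * m)))" for t
    unfolding Z_def e_def c_def q_def by (rule TB_Z[where ac=ac and ar=ar and i=i, OF a2 mdef mpos])
  have cj: "c = j - 1" using jdef c_def by simp
  have TO: "T_op n Q ac ar i \<tau> g u \<mu> = (\<Sum>x\<in>{Z 0, Z j}. u x * T_basis n Q ac ar i \<tau> g x \<mu>)"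
    by (rule T_op_fin) (auto simp: u_eq Ymon_def)
  have TO2: "T_op n Q ac ar i \<tau> g u \<mu> = T_basis n Q ac ar i \<tau> g (Z 0) \<mu> - G * T_basis n Q ac ar i \<tau> g (Z j) \<mu>"
    unfolding TO using j0 Zinj[of 0 j] by (simp add: u_eq YZ)
  have T0: "T_basis n Q ac ar i \<tau> g (Z 0) \<mu> = G * e j + (\<tau>^2 - 1) * e 0"
  proof -
    have h: "c - 2*0 \<ge> 0" using cj j0 by simp
    have d: "(j - 1) div m = 0" using j0 jm by (simp add: div_pos_pos_trivial)
    have e1: "c - 2*0 + 1 = j" "c + 1 - 0 = j" "(c - 2*0) div m = 0" using cj d by simp_all
    show ?thesis using TB[of 0] h unfolding e1 G_def by simp
  qed
  have T1: "T_basis n Q ac ar i \<tau> g (Z j) \<mu> = G' * e 0"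
  proof -
    have h: "\<not> c - 2*j \<ge> 0" using cj j0 by simp
    have d: "j div m = 0" using j0 jm by (simp add: div_pos_pos_trivial)
    have e1: "c - 2*j + 1 = - j" "c + 1 - j = 0" "(2*j - c - 1) div m = 0" using cj d by simp_all
    show ?thesis using TB[of j] h unfolding e1 G'_def by simp
  qed
  have "T_op n Q ac ar i \<tau> g u \<mu> = G * e j + (\<tau>^2 - 1) * e 0 - (G * G') * e 0"
    unfolding TO2 T0 T1 by (simp add: algebra_simps)
  thus "T_op n Q ac ar i \<tau> g u \<mu> = - u \<mu>" unfolding GG by (simp add: u_eq e_def algebra_simps)
qed

theorem mainTheorem2:
  fixes n :: nat
    and ac ar :: "'i::finite \<Rightarrow> ('r::finite \<Rightarrow> int)"
    and Q :: "('r \<Rightarrow> int) \<Rightarrow> int"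
    and \<tau> :: "'k::comm_ring_1" and g :: "int \<Rightarrow> 'k"
    and lam :: "'r \<Rightarrow> int" and i :: 'i
  assumes "n \<ge> 1"
    and "finite_type_root_datum ac ar"
    and "quadratic_form Q" and "W_invariant ac ar Q"
    and "twisted_simply_connected n Q ac"
    and "gauss_rel n \<tau> g"
  shows
   "(let j = pair lam (ar i) + 1; m = int (ncheck n Q (ac i)); q = Q (ac i);
         T = T_op n Q ac ar i \<tau> g; lb = dot_s ac ar i lam in
     (j \<ge> 0 \<and> m dvd j \<longrightarrow>
        (let u = (\<lambda>\<mu>. Ymon lam \<mu> + Ymon lb \<mu>) in T u = (\<lambda>\<mu>. - u \<mu>))) \<and>
     (0 < j \<and> j < m \<longrightarrow>
        (let gg = g (j * q); u = (\<lambda>\<mu>. Ymon lam \<mu> - gg * Ymon lb \<mu>) in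
         T u = (\<lambda>\<mu>. - u \<mu>))) \<and>
     (j > m \<and> \<not> m dvd j \<longrightarrow>
        (let lam1 = vsub lam (smul (j mod m) (ac i)); gg = g (j * q);
             u = (\<lambda>\<mu>. Ymon lam \<mu> - gg * Ymon lb \<mu> - gg * Ymon lam1 \<mu>
                       + Ymon (dot_s ac ar i lam1) \<mu>) in
         T u = (\<lambda>\<mu>. - u \<mu>))))"
  proof -
  have a2: "pair (ac i) (ar i) = 2" using assms(2) unfolding finite_type_root_datum_def by blast
  have gp: "\<And>k l. k mod int n = l mod int n \<Longrightarrow> g k = g l"
    and gi: "\<And>k. \<not> int n dvd k \<Longrightarrow> g k * g (-k) = \<tau>^2"
    and g0: "g 0 = -1" using assms(6) unfolding gauss_rel_def by blast+
  note np = ncheck_props[where Q=Q and c="ac i", OF assms(1)]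
  have mpos: "0 < int (ncheck n Q (ac i))" using np(1) by simp
  show ?thesis
    unfolding Let_def
    apply (intro conjI impI; elim conjE)
    subgoal by (rule case1[where ac=ac and ar=ar and i=i and n=n and Q=Q and g=g and \<tau>=\<tau> and lam=lam and m="int (ncheck n Q (ac i))" and j="pair lam (ar i) + 1"]) (assumption | rule a2 refl mpos np gp g0)+
    subgoal by (rule case2[where ac=ac and ar=ar and i=i and n=n and Q=Q and g=g and \<tau>=\<tau> and lam=lam and m="int (ncheck n Q (ac i))" and j="pair lam (ar i) + 1"]) (assumption | rule a2 refl mpos np gi)+
    subgoal by (rule case3[where ac=ac and ar=ar and i=i and n=n and Q=Q and g=g and \<tau>=\<tau> and lam=lam and m="int (ncheck n Q (ac i))" and j="pair lam (ar i) + 1"]) (assumption | rule a2 refl mpos np gp gi)+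
    done
qed

end
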